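(* Let $U$ be a finite nonempty set, $(T,I,N)$ a residual triplet, $\widetilde{R}$ a $T$-preorder relation on $U$, $A$ a fuzzy set on $U$, and $L:\mathbb{R}\times\mathbb{R}\to\mathbb{R}^+$ a loss function of $\lor$-type. Let $\hat{A}:U\to[0,1]$ be an optimal solution of the problem $$\text{minimize }\sum_{u\in U}L(A(u),\hat{A}(u))\quad\text{subject to } T(\widetilde{R}(u,v),\hat{A}(v))\le\hat{A}(u)\ (u,v\in U),\quad 0\le\hat{A}(u)\le1\ (u\in U).$$ Define $U^-=\{u\in U;\hat{A}(u)<A(u)\}$, $U^0=\{u\in U;\hat{A}(u)=A(u)\}$, $U^+=\{u\in U;\hat{A}(u)>A(u)\}$. Then $$\hat{A}(u)=\max\{T(\widetilde{R}(u,v),\hat{A}(v)); v\in U^-\cup U^0\}\quad\text{for every } u\in U^+,$$ and $$\hat{A}(u)=\min\{I(\widetilde{R}(v,u),\hat{A}(v)); v\in U^+\cup U^0\}\quad\text{for every } u\in U^-.$$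
   Context: A residual triplet $(T,I,N)$ consists of a left-continuous $t$-norm $T$, its residual implicator $I(x,y)=\sup\{\beta\in[0,1]: T(x,\beta)\le y\}$ and $N(x)=I(x,0)$. $\widetilde{R}:U\times U\to[0,1]$ is a $T$-preorder if reflexive and $T$-transitive ($T(\widetilde{R}(u,v),\widetilde{R}(v,w))\le\widetilde{R}(u,w)$). A fuzzy set on $U$ is a map $U\to[0,1]$. A loss function $L$ is of $\lor$-type if for every real $a$: $L(a,a)=0$; the functions $x\mapsto L(x,a)$ and $x\mapsto L(a,x)$ are increasing for $x>a$; and these functions are decreasing for $x<a$. *)

theory Defs
  imports Complex_Main
begin

definition tnorm :: "(real \<Rightarrow> real \<Rightarrow> real) \<Rightarrow> bool" where
  "tnorm T \<longleftrightarrow>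
     (\<forall>x\<in>{0..1}. \<forall>y\<in>{0..1}. T x y \<in> {0..1}) \<and>
     (\<forall>x\<in>{0..1}. \<forall>y\<in>{0..1}. T x y = T y x) \<and>
     (\<forall>x\<in>{0..1}. \<forall>y\<in>{0..1}. \<forall>z\<in>{0..1}. T x (T y z) = T (T x y) z) \<and>
     (\<forall>x\<in>{0..1}. \<forall>y\<in>{0..1}. \<forall>z\<in>{0..1}. y \<le> z \<longrightarrow> T x y \<le> T x z) \<and>
     (\<forall>x\<in>{0..1}. T x 1 = x)"

text \<open>Left-continuity (in the first argument; by commutativity in both).\<close>
definition left_continuous_tnorm :: "(real \<Rightarrow> real \<Rightarrow> real) \<Rightarrow> bool" where
  "left_continuous_tnorm T \<longleftrightarrow> tnorm T \<and>
     (\<forall>x\<in>{0<..1}. \<forall>y\<in>{0..1}. continuous (at_left x) (\<lambda>z. T z y))"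

definition residual_imp :: "(real \<Rightarrow> real \<Rightarrow> real) \<Rightarrow> real \<Rightarrow> real \<Rightarrow> real" where
  "residual_imp T x y = Sup {\<beta>. \<beta> \<in> {0..1} \<and> T x \<beta> \<le> y}"

definition T_preorder :: "(real \<Rightarrow> real \<Rightarrow> real) \<Rightarrow> 'a set \<Rightarrow> ('a \<Rightarrow> 'a \<Rightarrow> real) \<Rightarrow> bool" where
  "T_preorder T U R \<longleftrightarrow>
     (\<forall>u\<in>U. \<forall>v\<in>U. R u v \<in> {0..1}) \<and>
     (\<forall>u\<in>U. R u u = 1) \<and>
     (\<forall>u\<in>U. \<forall>v\<in>U. \<forall>w\<in>U. T (R u v) (R v w) \<le> R u w)"

definition fuzzy_set :: "'a set \<Rightarrow> ('a \<Rightarrow> real) \<Rightarrow> bool" where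
  "fuzzy_set U A \<longleftrightarrow> (\<forall>u\<in>U. A u \<in> {0..1})"

definition vee_type_loss :: "(real \<Rightarrow> real \<Rightarrow> real) \<Rightarrow> bool" where
  "vee_type_loss L \<longleftrightarrow>
     (\<forall>a b. L a b \<ge> 0) \<and>
     (\<forall>a. L a a = 0) \<and>
     (\<forall>a. strict_mono_on {a<..} (\<lambda>x. L x a)) \<and>
     (\<forall>a. strict_mono_on {a<..} (\<lambda>x. L a x)) \<and>
     (\<forall>a. strict_antimono_on {..<a} (\<lambda>x. L x a)) \<and>
     (\<forall>a. strict_antimono_on {..<a} (\<lambda>x. L a x))"

definition feasible :: "(real \<Rightarrow> real \<Rightarrow> real) \<Rightarrow> 'a set \<Rightarrow> ('a \<Rightarrow> 'a \<Rightarrow> real) \<Rightarrow> ('a \<Rightarrow> real) \<Rightarrow> bool" where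
  "feasible T U R B \<longleftrightarrow>
     (\<forall>u\<in>U. \<forall>v\<in>U. T (R u v) (B v) \<le> B u) \<and> (\<forall>u\<in>U. 0 \<le> B u \<and> B u \<le> 1)"

definition optimal_solution ::
  "(real \<Rightarrow> real \<Rightarrow> real) \<Rightarrow> (real \<Rightarrow> real \<Rightarrow> real) \<Rightarrow> 'a set \<Rightarrow> ('a \<Rightarrow> 'a \<Rightarrow> real)
     \<Rightarrow> ('a \<Rightarrow> real) \<Rightarrow> ('a \<Rightarrow> real) \<Rightarrow> bool" where
  "optimal_solution L T U R A Ah \<longleftrightarrow> feasible T U R Ah \<and>
     (\<forall>B. feasible T U R B \<longrightarrow> (\<Sum>u\<in>U. L (A u) (Ah u)) \<le> (\<Sum>u\<in>U. L (A u) (B u)))"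

end

theory Submission imports Defs begin

lemma tn:
  assumes "tnorm T"
  shows tn_range: "\<And>x y. x\<in>{0..1} \<Longrightarrow> y\<in>{0..1} \<Longrightarrow> T x y \<in> {0..1}"
    and tn_comm: "\<And>x y. x\<in>{0..1} \<Longrightarrow> y\<in>{0..1} \<Longrightarrow> T x y = T y x"
    and tn_assoc: "\<And>x y z. x\<in>{0..1} \<Longrightarrow> y\<in>{0..1} \<Longrightarrow> z\<in>{0..1} \<Longrightarrow> T x (T y z) = T (T x y) z"
    and tn_mono2: "\<And>x y z. x\<in>{0..1} \<Longrightarrow> y\<in>{0..1} \<Longrightarrow> z\<in>{0..1} \<Longrightarrow> y \<le> z \<Longrightarrow> T x y \<le> T x z"
    and tn_one: "\<And>x. x\<in>{0..1} \<Longrightarrow> T x 1 = x"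
  using assms unfolding tnorm_def by blast+

lemma tn_mono1:
  assumes "tnorm T" "x\<in>{0..1}" "y\<in>{0..1}" "z\<in>{0..1}" "x \<le> y"
  shows "T x z \<le> T y z"
  using tn_comm[OF assms(1)] tn_mono2[OF assms(1)] assms by metis

lemma tn_one1:
  assumes "tnorm T" "x\<in>{0..1}" shows "T 1 x = x"
  using tn_comm[OF assms(1)] tn_one[OF assms(1)] assms by (metis atLeastAtMost_iff order_refl zero_le_one)

lemma tn_le2:
  assumes "tnorm T" "x\<in>{0..1}" "y\<in>{0..1}" shows "T x y \<le> y"
proof -
  have "T x y \<le> T 1 y" using tn_mono1[OF assms(1) assms(2) _ assms(3)] assms by auto
  then show ?thesis using tn_one1[OF assms(1,3)] by simp
qed

lemma tn_zero:
  assumes "tnorm T" "x\<in>{0..1}" shows "T x 0 = 0"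
  using tn_le2[OF assms(1,2)] tn_range[OF assms(1) assms(2)] by force

lemma resid_range_set:
  assumes "tnorm T" "r\<in>{0..1}" "y\<in>{0..1}"
  shows "0 \<in> {\<beta>. \<beta> \<in> {0..1} \<and> T r \<beta> \<le> y}"
    and "bdd_above {\<beta>. \<beta> \<in> {0..1} \<and> T r \<beta> \<le> y}"
  using tn_zero[OF assms(1,2)] assms by (auto intro: bdd_aboveI[of _ 1])

lemma resid_range:
  assumes "tnorm T" "r\<in>{0..1}" "y\<in>{0..1}"
  shows "residual_imp T r y \<in> {0..1}"
proof -
  let ?S = "{\<beta>. \<beta> \<in> {0..1} \<and> T r \<beta> \<le> y}"
  have a: "0 \<le> Sup ?S" using resid_range_set[OF assms] by (meson cSup_upper)
  have ne: "?S \<noteq> {}" using resid_range_set(1)[OF assms] by blast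
  have b: "Sup ?S \<le> 1" using ne by (intro cSup_least) auto
  from a b show ?thesis unfolding residual_imp_def by auto
qed

lemma resid_iff:
  assumes lc: "left_continuous_tnorm T" and r: "r\<in>{0..1}" and y: "y\<in>{0..1}" and b: "b\<in>{0..1}"
  shows "T r b \<le> y \<longleftrightarrow> b \<le> residual_imp T r y"
proof -
  have tT: "tnorm T" using lc unfolding left_continuous_tnorm_def by blast
  let ?S = "{\<beta>. \<beta> \<in> {0..1} \<and> T r \<beta> \<le> y}"
  note S = resid_range_set[OF tT r y]
  have I: "residual_imp T r y = Sup ?S" unfolding residual_imp_def by simp
  show ?thesis
  proof
    assume "T r b \<le> y" then show "b \<le> residual_imp T r y" unfolding I using S b
      by (intro cSup_upper) auto
  next
    assume bI: "b \<le> residual_imp T r y"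
    show "T r b \<le> y"
    proof (cases "b < Sup ?S")
      case True
      then obtain s where s: "s \<in> ?S" "b < s" using less_cSup_iff[of ?S b] S by blast
      then show ?thesis using tn_mono2[OF tT r b, of s] by auto
    next
      case False
      with bI I have bS: "b = Sup ?S" by simp
      show ?thesis
      proof (cases "b = 0")
        case True then show ?thesis using tn_zero[OF tT r] y by simp
      next
        case False
        with b have b0: "b \<in> {0<..1}" by auto
        have "continuous (at_left b) (\<lambda>z. T z r)" using lc b0 r unfolding left_continuous_tnorm_def by blast
        then have lim: "((\<lambda>z. T z r) \<longlongrightarrow> T b r) (at_left b)"
          by (simp add: continuous_within)
        have "eventually (\<lambda>z. z \<in> {0<..<b}) (at_left b)"
          using eventually_at_left_real[of 0 b] b0 by auto
        then have ev: "eventually (\<lambda>z. T z r \<le> y) (at_left b)"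
        proof (rule eventually_mono)
          fix z assume z: "z \<in> {0<..<b}"
          then have "z < Sup ?S" using bS by simp
          then obtain s where s: "s \<in> ?S" "z < s" using less_cSup_iff[of ?S z] S by blast
          have "T z r = T r z" using tn_comm[OF tT, of z r] z b0 r by auto
          also have "\<dots> \<le> T r s" using tn_mono2[OF tT r, of z s] z s b0 by auto
          finally show "T z r \<le> y" using s by auto
        qed
        have "T b r \<le> y" using tendsto_upperbound[OF lim ev] by simp
        then show ?thesis using tn_comm[OF tT b r] by simp
      qed
    qed
  qed
qed

lemma loss_up:
  assumes "vee_type_loss L" "a \<le> b" "b < c"
  shows "L a b < L a c"
proof -
  have m: "strict_mono_on {a<..} (\<lambda>x. L a x)" and z: "L a a = 0" and p: "\<And>x. L a x \<ge> 0"
    using assms(1) unfolding vee_type_loss_def by blast+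
  show ?thesis
  proof (cases "a = b")
    case True
    have "L a ((a+c)/2) < L a c" using assms True by (intro strict_mono_onD[OF m]) auto
    then show ?thesis using p[of "(a+c)/2"] z True by simp
  next
    case False
    then show ?thesis using assms by (intro strict_mono_onD[OF m]) auto
  qed
qed

lemma loss_down:
  assumes "vee_type_loss L" "b \<le> a" "c < b"
  shows "L a b < L a c"
proof -
  have m: "strict_antimono_on {..<a} (\<lambda>x. L a x)" and z: "L a a = 0" and p: "\<And>x. L a x \<ge> 0"
    using assms(1) unfolding vee_type_loss_def by blast+
  show ?thesis
  proof (cases "a = b")
    case True
    have "L a ((a+c)/2) < L a c" using assms True by (intro monotone_onD[OF m]) auto
    then show ?thesis using p[of "(a+c)/2"] z True by simp
  next
    case False
    then show ?thesis using assms by (intro monotone_onD[OF m]) auto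
  qed
qed


theorem theorem1:
  fixes U :: "'a set" and T L :: "real \<Rightarrow> real \<Rightarrow> real"
    and R :: "'a \<Rightarrow> 'a \<Rightarrow> real" and A Ah :: "'a \<Rightarrow> real"
  assumes "finite U" and "U \<noteq> {}"
    and "left_continuous_tnorm T"
    and "T_preorder T U R"
    and "fuzzy_set U A"
    and "vee_type_loss L"
    and "optimal_solution L T U R A Ah"
  shows "(\<forall>u\<in>U. Ah u > A u \<longrightarrow>
            Ah u = Max {T (R u v) (Ah v) | v. v \<in> U \<and> Ah v \<le> A v})
       \<and> (\<forall>u\<in>U. Ah u < A u \<longrightarrow>
            Ah u = Min {residual_imp T (R v u) (Ah v) | v. v \<in> U \<and> Ah v \<ge> A v})"
proof -
  note fin = assms(1) and ne = assms(2) and lc = assms(3) and vL = assms(6)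
  have tT: "tnorm T" using lc unfolding left_continuous_tnorm_def by blast
  have F1: "\<And>u v. u \<in> U \<Longrightarrow> v \<in> U \<Longrightarrow> T (R u v) (Ah v) \<le> Ah u"
    and Ah01: "\<And>u. u \<in> U \<Longrightarrow> Ah u \<in> {0..1}"
    using assms(7) unfolding optimal_solution_def feasible_def by auto
  have opt: "\<And>B. feasible T U R B \<Longrightarrow> (\<Sum>u\<in>U. L (A u) (Ah u)) \<le> (\<Sum>u\<in>U. L (A u) (B u))"
    using assms(7) unfolding optimal_solution_def by blast
  have R01: "\<And>u v. u \<in> U \<Longrightarrow> v \<in> U \<Longrightarrow> R u v \<in> {0..1}"
    and Rrefl: "\<And>u. u \<in> U \<Longrightarrow> R u u = 1"
    and Rtr: "\<And>u v w. u \<in> U \<Longrightarrow> v \<in> U \<Longrightarrow> w \<in> U \<Longrightarrow> T (R u v) (R v w) \<le> R u w"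
    using assms(4) unfolding T_preorder_def by blast+
  have A01: "\<And>u. u \<in> U \<Longrightarrow> A u \<in> {0..1}" using assms(5) unfolding fuzzy_set_def by blast
  have opt_eq: "\<forall>w\<in>U. L (A w) (B w) = L (A w) (Ah w)"
    if fB: "feasible T U R B" and le: "\<forall>w\<in>U. L (A w) (B w) \<le> L (A w) (Ah w)" for B
  proof (rule ccontr)
    assume "\<not> ?thesis"
    then obtain w where "w \<in> U" "L (A w) (B w) < L (A w) (Ah w)" using le by force
    then have "(\<Sum>u\<in>U. L (A u) (B u)) < (\<Sum>u\<in>U. L (A u) (Ah u))"
      using le fin by (intro sum_strict_mono_ex1) auto
    then show False using opt[OF fB] by simp
  qed

  define g where "g x = min (A x) (Ah x)" for x
  define B where "B w = Max ((\<lambda>x. T (R w x) (g x)) ` U)" for w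
  have g01: "\<And>x. x \<in> U \<Longrightarrow> g x \<in> {0..1}" using A01 Ah01 unfolding g_def by (auto simp: min_def)
  have Bex: "\<exists>x\<in>U. B w = T (R w x) (g x)" if "w \<in> U" for w
  proof -
    have "B w \<in> (\<lambda>x. T (R w x) (g x)) ` U" unfolding B_def using fin ne by (intro Max_in) auto
    then show ?thesis by auto
  qed
  have Bge: "T (R w x) (g x) \<le> B w" if "x \<in> U" for w x
    unfolding B_def using fin that by (intro Max_ge) auto
  have Ble: "B w \<le> Ah w" if w: "w \<in> U" for w
  proof -
    obtain x where x: "x \<in> U" "B w = T (R w x) (g x)" using Bex[OF w] by blast
    have "T (R w x) (g x) \<le> T (R w x) (Ah x)"
      using tn_mono2[OF tT R01[OF w x(1)] g01[OF x(1)] Ah01[OF x(1)]] unfolding g_def by simp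
    also have "\<dots> \<le> Ah w" using F1 w x by blast
    finally show ?thesis using x by simp
  qed
  have Blo: "g w \<le> B w" if w: "w \<in> U" for w
    using Bge[OF w, of w] Rrefl[OF w] tn_one1[OF tT g01[OF w]] by simp
  have fB: "feasible T U R B"
    unfolding feasible_def
  proof (intro conjI ballI)
    fix u v assume u: "u \<in> U" and v: "v \<in> U"
    obtain x where x: "x \<in> U" "B v = T (R v x) (g x)" using Bex[OF v] by blast
    have "T (R u v) (B v) = T (T (R u v) (R v x)) (g x)"
      using x tn_assoc[OF tT R01[OF u v] R01[OF v x(1)] g01[OF x(1)]] by simp
    also have "\<dots> \<le> T (R u x) (g x)"
      using tn_mono1[OF tT _ R01[OF u x(1)] g01[OF x(1)] Rtr[OF u v x(1)]]
        tn_range[OF tT R01[OF u v] R01[OF v x(1)]] by simp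
    also have "\<dots> \<le> B u" using Bge[OF x(1)] by simp
    finally show "T (R u v) (B v) \<le> B u" .
  next
    fix u assume u: "u \<in> U"
    show "0 \<le> B u" using Blo[OF u] Ble[OF u] g01[OF u] Ah01[OF u] by auto
  next
    fix u assume u: "u \<in> U"
    show "B u \<le> 1" using Blo[OF u] Ble[OF u] g01[OF u] Ah01[OF u] by auto
  qed
  have Beq: "B w = Ah w" if w: "w \<in> U" for w
  proof -
    have le: "\<forall>w\<in>U. L (A w) (B w) \<le> L (A w) (Ah w)"
    proof
      fix w assume w: "w \<in> U"
      show "L (A w) (B w) \<le> L (A w) (Ah w)"
      proof (cases "Ah w \<le> A w")
        case True
        then have "B w = Ah w" using Blo[OF w] Ble[OF w] unfolding g_def by simp
        then show ?thesis by simp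
      next
        case False
        then have "A w \<le> B w" using Blo[OF w] unfolding g_def by simp
        then show ?thesis using Ble[OF w] loss_up[OF vL, of "A w" "B w" "Ah w"]
          by (cases "B w = Ah w") auto
      qed
    qed
    have eq: "L (A w) (B w) = L (A w) (Ah w)" using opt_eq[OF fB le] w by blast
    show ?thesis
    proof (rule ccontr)
      assume ne: "B w \<noteq> Ah w"
      then have lt: "B w < Ah w" using Ble[OF w] by simp
      show False
      proof (cases "Ah w \<le> A w")
        case True
        then show False using Blo[OF w] lt unfolding g_def by simp
      next
        case False
        then have aw: "A w \<le> B w" using Blo[OF w] unfolding g_def by simp
        show False using loss_up[OF vL aw lt] eq by simp
      qed
    qed
  qed
  have key1: "\<exists>x\<in>U. Ah w = T (R w x) (g x)" if "w \<in> U" for w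
    using Bex[OF that] Beq[OF that] by simp
  have P1: "w \<in> U \<longrightarrow> A w < Ah w \<longrightarrow> (\<exists>v\<in>U. Ah v \<le> A v \<and> Ah w = T (R w v) (Ah v))" for w
  proof (induction w rule: measure_induct_rule[where f = "\<lambda>w. card {y\<in>U. Ah w < Ah y}"])
    case (less w)
    show ?case
    proof (intro impI)
      assume w: "w \<in> U" and aw: "A w < Ah w"
      obtain x where x: "x \<in> U" "Ah w = T (R w x) (g x)" using key1[OF w] by blast
      show "\<exists>v\<in>U. Ah v \<le> A v \<and> Ah w = T (R w v) (Ah v)"
      proof (cases "Ah x \<le> A x")
        case True
        then show ?thesis using x unfolding g_def by (intro bexI[of _ x]) auto
      next
        case False
        then have gx: "g x = A x" unfolding g_def by simp
        have "Ah w \<le> A x" using x gx tn_le2[OF tT R01[OF w x(1)] A01[OF x(1)]] by simp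
        with False have wx: "Ah w < Ah x" by simp
        have "{y\<in>U. Ah x < Ah y} \<subset> {y\<in>U. Ah w < Ah y}" using wx x(1) by auto
        then have "card {y\<in>U. Ah x < Ah y} < card {y\<in>U. Ah w < Ah y}"
          using fin by (intro psubset_card_mono) auto
        then obtain v where v: "v \<in> U" "Ah v \<le> A v" "Ah x = T (R x v) (Ah v)"
          using less[of x] x(1) False by force
        have "Ah w = T (R w x) (A x)" using x gx by simp
        also have "\<dots> \<le> T (R w x) (Ah x)"
          using tn_mono2[OF tT R01[OF w x(1)] A01[OF x(1)] Ah01[OF x(1)]] False by simp
        also have "\<dots> = T (T (R w x) (R x v)) (Ah v)"
          using v tn_assoc[OF tT R01[OF w x(1)] R01[OF x(1) v(1)] Ah01[OF v(1)]] by simp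
        also have "\<dots> \<le> T (R w v) (Ah v)"
          using tn_mono1[OF tT _ R01[OF w v(1)] Ah01[OF v(1)] Rtr[OF w x(1) v(1)]]
            tn_range[OF tT R01[OF w x(1)] R01[OF x(1) v(1)]] by simp
        finally have "Ah w \<le> T (R w v) (Ah v)" .
        then have "Ah w = T (R w v) (Ah v)" using F1[OF w v(1)] by simp
        then show ?thesis using v by blast
      qed
    qed
  qed

  define h where "h x = max (A x) (Ah x)" for x
  define C where "C w = Min ((\<lambda>x. residual_imp T (R x w) (h x)) ` U)" for w
  have h01: "\<And>x. x \<in> U \<Longrightarrow> h x \<in> {0..1}" using A01 Ah01 unfolding h_def by (auto simp: max_def)
  have Cex: "\<exists>x\<in>U. C w = residual_imp T (R x w) (h x)" if "w \<in> U" for w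
  proof -
    have "C w \<in> (\<lambda>x. residual_imp T (R x w) (h x)) ` U" unfolding C_def using fin ne by (intro Min_in) auto
    then show ?thesis by auto
  qed
  have Cle: "C w \<le> residual_imp T (R x w) (h x)" if "x \<in> U" for w x
    unfolding C_def using fin that by (intro Min_le) auto
  have C01: "C w \<in> {0..1}" if w: "w \<in> U" for w
    using Cex[OF w] resid_range[OF tT R01 h01] w by auto
  have Cge: "Ah w \<le> C w" if w: "w \<in> U" for w
  proof -
    obtain x where x: "x \<in> U" "C w = residual_imp T (R x w) (h x)" using Cex[OF w] by blast
    have "T (R x w) (Ah w) \<le> h x" using F1[OF x(1) w] unfolding h_def by simp
    then show ?thesis using resid_iff[OF lc R01[OF x(1) w] h01[OF x(1)] Ah01[OF w]] x by simp
  qed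
  have Chi: "C w \<le> h w" if w: "w \<in> U" for w
  proof -
    have "C w \<le> residual_imp T (R w w) (h w)" using Cle[OF w] .
    then have "T (R w w) (C w) \<le> h w" using resid_iff[OF lc R01[OF w w] h01[OF w] C01[OF w]] by simp
    then show ?thesis using Rrefl[OF w] tn_one1[OF tT C01[OF w]] by simp
  qed
  have fC: "feasible T U R C"
    unfolding feasible_def
  proof (intro conjI ballI)
    fix u v assume u: "u \<in> U" and v: "v \<in> U"
    obtain x where x: "x \<in> U" "C u = residual_imp T (R x u) (h x)" using Cex[OF u] by blast
    have t1: "T (R u v) (C v) \<in> {0..1}" using tn_range[OF tT R01[OF u v] C01[OF v]] .
    have "T (R x v) (C v) \<le> h x"
      using resid_iff[OF lc R01[OF x(1) v] h01[OF x(1)] C01[OF v]] Cle[OF x(1)] by simp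
    moreover have "T (R x u) (T (R u v) (C v)) = T (T (R x u) (R u v)) (C v)"
      using tn_assoc[OF tT R01[OF x(1) u] R01[OF u v] C01[OF v]] .
    moreover have "T (T (R x u) (R u v)) (C v) \<le> T (R x v) (C v)"
      using tn_mono1[OF tT _ R01[OF x(1) v] C01[OF v] Rtr[OF x(1) u v]]
        tn_range[OF tT R01[OF x(1) u] R01[OF u v]] by simp
    ultimately have "T (R x u) (T (R u v) (C v)) \<le> h x" by simp
    then show "T (R u v) (C v) \<le> C u"
      using resid_iff[OF lc R01[OF x(1) u] h01[OF x(1)] t1] x by simp
  next
    fix u assume u: "u \<in> U"
    show "0 \<le> C u" using C01[OF u] by auto
  next
    fix u assume u: "u \<in> U"
    show "C u \<le> 1" using C01[OF u] by auto
  qed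
  have Ceq: "C w = Ah w" if w: "w \<in> U" for w
  proof -
    have le: "\<forall>w\<in>U. L (A w) (C w) \<le> L (A w) (Ah w)"
    proof
      fix w assume w: "w \<in> U"
      show "L (A w) (C w) \<le> L (A w) (Ah w)"
      proof (cases "A w \<le> Ah w")
        case True
        then have "C w = Ah w" using Cge[OF w] Chi[OF w] unfolding h_def by simp
        then show ?thesis by simp
      next
        case False
        then have "C w \<le> A w" using Chi[OF w] unfolding h_def by simp
        then show ?thesis using Cge[OF w] loss_down[OF vL, of "C w" "A w" "Ah w"]
          by (cases "C w = Ah w") auto
      qed
    qed
    have eq: "L (A w) (C w) = L (A w) (Ah w)" using opt_eq[OF fC le] w by blast
    show ?thesis
    proof (rule ccontr)
      assume ne: "C w \<noteq> Ah w"
      then have lt: "Ah w < C w" using Cge[OF w] by simp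
      show False
      proof (cases "A w \<le> Ah w")
        case True
        then show False using Chi[OF w] lt unfolding h_def by simp
      next
        case False
        then have cw: "C w \<le> A w" using Chi[OF w] unfolding h_def by simp
        show False using loss_down[OF vL cw lt] eq by simp
      qed
    qed
  qed
  have key2: "\<exists>x\<in>U. Ah w = residual_imp T (R x w) (h x)" if "w \<in> U" for w
    using Cex[OF that] Ceq[OF that] by simp
  have P2: "w \<in> U \<longrightarrow> Ah w < A w \<longrightarrow> (\<exists>v\<in>U. A v \<le> Ah v \<and> Ah w = residual_imp T (R v w) (Ah v))" for w
  proof (induction w rule: measure_induct_rule[where f = "\<lambda>w. card {y\<in>U. Ah y < Ah w}"])
    case (less w)
    show ?case
    proof (intro impI)
      assume w: "w \<in> U" and aw: "Ah w < A w"
      obtain x where x: "x \<in> U" "Ah w = residual_imp T (R x w) (h x)" using key2[OF w] by blast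
      show "\<exists>v\<in>U. A v \<le> Ah v \<and> Ah w = residual_imp T (R v w) (Ah v)"
      proof (cases "A x \<le> Ah x")
        case True
        then show ?thesis using x unfolding h_def by (intro bexI[of _ x]) auto
      next
        case False
        then have hx: "h x = A x" unfolding h_def by simp
        have "T (R x w) (A x) \<le> A x" using tn_le2[OF tT R01[OF x(1) w] A01[OF x(1)]] .
        then have "A x \<le> residual_imp T (R x w) (A x)"
          using resid_iff[OF lc R01[OF x(1) w] A01[OF x(1)] A01[OF x(1)]] by simp
        then have "A x \<le> Ah w" using x hx by simp
        with False have wx: "Ah x < Ah w" by simp
        have "{y\<in>U. Ah y < Ah x} \<subset> {y\<in>U. Ah y < Ah w}" using wx x(1) by auto
        then have "card {y\<in>U. Ah y < Ah x} < card {y\<in>U. Ah y < Ah w}"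
          using fin by (intro psubset_card_mono) auto
        then obtain v where v: "v \<in> U" "A v \<le> Ah v" "Ah x = residual_imp T (R v x) (Ah v)"
          using less[of x] x(1) False by force
        define \<beta> where "\<beta> = residual_imp T (R v w) (Ah v)"
        have b01: "\<beta> \<in> {0..1}" unfolding \<beta>_def using resid_range[OF tT R01[OF v(1) w] Ah01[OF v(1)]] .
        have "T (R v w) \<beta> \<le> Ah v"
          using resid_iff[OF lc R01[OF v(1) w] Ah01[OF v(1)] b01] unfolding \<beta>_def by simp
        moreover have "T (R v x) (T (R x w) \<beta>) = T (T (R v x) (R x w)) \<beta>"
          using tn_assoc[OF tT R01[OF v(1) x(1)] R01[OF x(1) w] b01] .
        moreover have "T (T (R v x) (R x w)) \<beta> \<le> T (R v w) \<beta>"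
          using tn_mono1[OF tT _ R01[OF v(1) w] b01 Rtr[OF v(1) x(1) w]]
            tn_range[OF tT R01[OF v(1) x(1)] R01[OF x(1) w]] by simp
        ultimately have "T (R v x) (T (R x w) \<beta>) \<le> Ah v" by simp
        then have "T (R x w) \<beta> \<le> Ah x"
          using resid_iff[OF lc R01[OF v(1) x(1)] Ah01[OF v(1)] tn_range[OF tT R01[OF x(1) w] b01]] v(3)
          by simp
        then have "T (R x w) \<beta> \<le> A x" using False by simp
        then have "\<beta> \<le> Ah w"
          using resid_iff[OF lc R01[OF x(1) w] A01[OF x(1)] b01] x hx by simp
        moreover have "Ah w \<le> \<beta>" unfolding \<beta>_def
          using resid_iff[OF lc R01[OF v(1) w] Ah01[OF v(1)] Ah01[OF w]] F1[OF v(1) w] by simp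
        ultimately show ?thesis using v unfolding \<beta>_def by (intro bexI[of _ v]) auto
      qed
    qed
  qed

  show ?thesis
  proof (intro conjI ballI impI)
    fix u assume u: "u \<in> U" and au: "A u < Ah u"
    obtain v where v: "v \<in> U" "Ah v \<le> A v" "Ah u = T (R u v) (Ah v)" using P1[of u] u au by blast
    have eqs: "{T (R u v) (Ah v) | v. v \<in> U \<and> Ah v \<le> A v} = (\<lambda>v. T (R u v) (Ah v)) ` {v\<in>U. Ah v \<le> A v}"
      by auto
    show "Ah u = Max {T (R u v) (Ah v) | v. v \<in> U \<and> Ah v \<le> A v}"
      unfolding eqs using fin v F1[OF u]
      by (intro Max_eqI[symmetric]) auto
  next
    fix u assume u: "u \<in> U" and au: "Ah u < A u"
    obtain v where v: "v \<in> U" "A v \<le> Ah v" "Ah u = residual_imp T (R v u) (Ah v)"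
      using P2[of u] u au by blast
    have eqs: "{residual_imp T (R v u) (Ah v) | v. v \<in> U \<and> Ah v \<ge> A v}
        = (\<lambda>v. residual_imp T (R v u) (Ah v)) ` {v\<in>U. Ah v \<ge> A v}"
      by auto
    have lb: "Ah u \<le> residual_imp T (R y u) (Ah y)" if y: "y \<in> U" for y
      using resid_iff[OF lc R01[OF y u] Ah01[OF y] Ah01[OF u]] F1[OF y u] by simp
    show "Ah u = Min {residual_imp T (R v u) (Ah v) | v. v \<in> U \<and> Ah v \<ge> A v}"
      unfolding eqs using fin v lb
      by (intro Min_eqI[symmetric]) auto
  qed
qed

end
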